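(* Let $k<n$ and $\phi(k)<m<2n$. Then the value in $U_q^+(\mathfrak{so}_{2n})$ of the bracketed word $[x_k\,x_{k+1}\cdots x_{n-2}\,x_n\,y_m]$, where $y_m=e[n+1,m]=[x_{n+1},[x_{n+2},[\dots,[x_{m-1},x_m]\dots]]]$, does not depend on the arrangement of the (skew) brackets on the sequence $x_k,\dots,x_{n-2},x_n,y_m$.
   Context: Let $\mathbf{k}$ be a field, $G$ an abelian group, $n\ge3$, $X=\{x_1,\dots,x_n\}$, $g_i\in G$, characters $\chi^i:G\to\mathbf{k}^*$, $p_{ij}=\chi^i(g_j)$; for homogeneous $u,v$, $p(u,v)=\chi^u(g_v)$ (replace $x_i$ by $g_i$, resp. $\chi^i$). $G\langle X\rangle$: skew group algebra with $x_ig=\chi^i(g)gx_i$; skew bracket $[u,v]=uv-p(u,v)vu$. Fix $q\in\mathbf{k}^*$, $q\ne-1$; assume $p_{ii}=q$ ($1\le i\le n$), $p_{i,i-1}p_{i-1,i}=q^{-1}$ ($1<i<n$), $p_{n-2,n}p_{n,n-2}=q^{-1}$, $p_{n-1,n}p_{n,n-1}=1$, $p_{ij}p_{ji}=1$ for all other $i<j$ with $j>i+1$. $U_q^+(\mathfrak{so}_{2n})$ is the quotient of $G\langle X\rangle$ by the ideal generated by $[x_i,[x_i,x_{i+1}]]$, $[[x_i,x_{i+1}],x_{i+1}]$ ($1\le i\le n-2$), $[x_{n-2},[x_{n-2},x_n]]$, $[[x_{n-2},x_n],x_n]$, $[x_i,x_j]$ ($1\le i<j\le n-1$, $j>i+1$),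 $[x_i,x_n]$ ($i\le n-3$), $[x_{n-1},x_n]$. For $n<i<2n$, $x_i:=x_{2n-i}$; $\phi(i)=2n-i$. (When $k=n-1$ the sequence is $x_n,y_m$.) *)

theory Defs
  imports "HOL-Library.Poly_Mapping"
begin

datatype word = Word "nat list"

instantiation word :: monoid_add
begin
definition zero_word_def: "0 = Word []"
fun plus_word :: "word \<Rightarrow> word \<Rightarrow> word" where
  "plus_word (Word u) (Word v) = Word (u @ v)"
instance
proof
  fix a b c :: word
  show "a + b + c = a + (b + c)" by (cases a; cases b; cases c) simp
  show "0 + a = a" by (cases a) (simp add: zero_word_def)
  show "a + 0 = a" by (cases a) (simp add: zero_word_def)
qed
end

text \<open>Elements of the free algebra k<X>: finitely supported k-linear combinations of words,
  with the convolution (concatenation) product.\<close>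
type_synonym 'k falg = "word \<Rightarrow>\<^sub>0 'k"

definition gen :: "nat \<Rightarrow> 'k::field falg" where
  "gen i = Poly_Mapping.single (Word [i]) 1"

definition scal :: "'k::field \<Rightarrow> 'k falg" where
  "scal c = Poly_Mapping.single (Word []) c"

datatype 'a btree = Lf 'a | Nd "'a btree" "'a btree"

fun leaves :: "'a btree \<Rightarrow> 'a list" where
  "leaves (Lf a) = [a]"
| "leaves (Nd s t) = leaves s @ leaves t"

text \<open>Multidegree (as a list of generator indices) of a bracketed word whose atoms have
  multidegrees given by d.\<close>
definition bdeg :: "('a \<Rightarrow> nat list) \<Rightarrow> 'a btree \<Rightarrow> nat list" where
  "bdeg d t = concat (map d (leaves t))"

text \<open>p(u,v) = chi^u(g_v) for homogeneous u, v with letter lists u, v (bimultiplicativity).\<close>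
definition pp :: "(nat \<Rightarrow> nat \<Rightarrow> 'k::field) \<Rightarrow> nat list \<Rightarrow> nat list \<Rightarrow> 'k" where
  "pp p u v = (\<Prod>a\<leftarrow>u. \<Prod>b\<leftarrow>v. p a b)"

fun beval :: "(nat \<Rightarrow> nat \<Rightarrow> 'k::field) \<Rightarrow> ('a \<Rightarrow> 'k falg) \<Rightarrow> ('a \<Rightarrow> nat list)
              \<Rightarrow> 'a btree \<Rightarrow> 'k falg" where
  "beval p f d (Lf a) = f a"
| "beval p f d (Nd s t) =
     beval p f d s * beval p f d t
     - scal (pp p (bdeg d s) (bdeg d t)) * beval p f d t * beval p f d s"

abbreviation xeval :: "(nat \<Rightarrow> nat \<Rightarrow> 'k::field) \<Rightarrow> nat btree \<Rightarrow> 'k falg" where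
  "xeval p t \<equiv> beval p gen (\<lambda>i. [i]) t"

fun rcomb :: "'a \<Rightarrow> 'a list \<Rightarrow> 'a btree" where
  "rcomb a [] = Lf a"
| "rcomb a (b # bs) = Nd (Lf a) (rcomb b bs)"

inductive_set tideal :: "'r::ring set \<Rightarrow> 'r set" for S where
  gen_in: "s \<in> S \<Longrightarrow> s \<in> tideal S"
| zero_in: "0 \<in> tideal S"
| add_in: "a \<in> tideal S \<Longrightarrow> b \<in> tideal S \<Longrightarrow> a + b \<in> tideal S"
| mult_in: "a \<in> tideal S \<Longrightarrow> u * a * v \<in> tideal S"

definition so_rels :: "(nat \<Rightarrow> nat \<Rightarrow> 'k::field) \<Rightarrow> nat \<Rightarrow> 'k falg set" where
  "so_rels p n =
     {xeval p (Nd (Lf i) (Nd (Lf i) (Lf (i+1)))) | i. 1 \<le> i \<and> i \<le> n - 2}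
   \<union> {xeval p (Nd (Nd (Lf i) (Lf (i+1))) (Lf (i+1))) | i. 1 \<le> i \<and> i \<le> n - 2}
   \<union> {xeval p (Nd (Lf (n-2)) (Nd (Lf (n-2)) (Lf n))),
      xeval p (Nd (Nd (Lf (n-2)) (Lf n)) (Lf n))}
   \<union> {xeval p (Nd (Lf i) (Lf j)) | i j. 1 \<le> i \<and> i < j \<and> j \<le> n - 1 \<and> i + 1 < j}
   \<union> {xeval p (Nd (Lf i) (Lf n)) | i. 1 \<le> i \<and> i \<le> n - 3}
   \<union> {xeval p (Nd (Lf (n-1)) (Lf n))}"

definition Ueq :: "(nat \<Rightarrow> nat \<Rightarrow> 'k::field) \<Rightarrow> nat \<Rightarrow> 'k falg \<Rightarrow> 'k falg \<Rightarrow> bool" where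
  "Ueq p n a b \<longleftrightarrow> a - b \<in> tideal (so_rels p n)"

definition phi :: "nat \<Rightarrow> nat \<Rightarrow> nat" where
  "phi n i = 2*n - i"

text \<open>Index of the generator denoted x_i (x_i = x_{phi i} for i > n).\<close>
definition xidx :: "nat \<Rightarrow> nat \<Rightarrow> nat" where
  "xidx n i = (if i \<le> n then i else 2*n - i)"

definition ym :: "(nat \<Rightarrow> nat \<Rightarrow> 'k::field) \<Rightarrow> nat \<Rightarrow> nat \<Rightarrow> 'k falg" where
  "ym p n m = beval p (\<lambda>i. gen (xidx n i)) (\<lambda>i. [xidx n i]) (rcomb (n+1) [n+2..<m+1])"

text \<open>Atoms of the sequence x_k,...,x_{n-2},x_n,y_m: Some i stands for x_i, None for y_m.\<close>
definition atom_val :: "(nat \<Rightarrow> nat \<Rightarrow> 'k::field) \<Rightarrow> nat \<Rightarrow> nat \<Rightarrow> nat option \<Rightarrow> 'k falg" where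
  "atom_val p n m a = (case a of Some i \<Rightarrow> gen i | None \<Rightarrow> ym p n m)"

definition atom_deg :: "nat \<Rightarrow> nat \<Rightarrow> nat option \<Rightarrow> nat list" where
  "atom_deg n m a = (case a of Some i \<Rightarrow> [i] | None \<Rightarrow> map (xidx n) [n+1..<m+1])"

definition the_seq :: "nat \<Rightarrow> nat \<Rightarrow> nat option list" where
  "the_seq n k = map Some [k..<n-1] @ [Some n, None]"

end

theory Submission
  imports Defs
begin


lemma scal_single: "scal c = Poly_Mapping.single 0 c" by (simp add: scal_def zero_word_def)
lemma gen_single: "gen i = Poly_Mapping.single (Word [i]) 1" by (simp add: gen_def)

lemma scal_mult: "scal a * scal b = scal (a * b)"
  by (simp add: scal_single mult_single)

lemma scal_mult2: "scal a * (scal b * X) = scal (a * b) * X"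
  by (simp add: mult.assoc[symmetric] scal_mult)

lemma scal_one: "scal 1 = 1" by (simp add: scal_single)

lemma update_eq_add: "a \<notin> Poly_Mapping.keys f \<Longrightarrow> Poly_Mapping.update a b f = f + Poly_Mapping.single a b"
  by (rule poly_mapping_eqI) (auto simp: lookup_update lookup_add lookup_single when_def in_keys_iff)

lemma scal_central: "scal c * (X :: 'k::field falg) = X * scal c"
proof (induction X rule: update_induct)
  case const then show ?case by simp
next
  case (update f a b)
  then show ?case
    by (simp add: update_eq_add distrib_left distrib_right scal_single mult_single mult.commute)
qed

lemma scal_right: "X * scal c = scal c * (X :: 'k::field falg)" by (simp add: scal_central)
lemma scal_mid: "X * (scal c * Y) = scal c * (X * (Y :: 'k::field falg))"
  by (metis mult.assoc scal_central)

lemma scal_mid': "NO_MATCH (scal a) X \<Longrightarrow> X * (scal c * Y) = scal c * (X * (Y :: 'k::field falg))"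
  by (rule scal_mid)

lemma scal_add: "scal (a + b) = scal a + scal b" by (simp add: scal_single single_add)
lemma scal_diff: "scal (a - b) = scal a - scal b" by (simp add: scal_single single_diff)
lemma scal_uminus: "scal (- a) = - scal a" by (simp add: scal_single single_uminus)

definition brk :: "(nat \<Rightarrow> nat \<Rightarrow> 'k::field) \<Rightarrow> nat list \<Rightarrow> nat list \<Rightarrow> 'k falg \<Rightarrow> 'k falg \<Rightarrow> 'k falg" where
  "brk p du dv u v = u * v - scal (pp p du dv) * v * u"

lemma beval_Nd': "beval p f d (Nd s t) = brk p (bdeg d s) (bdeg d t) (beval p f d s) (beval p f d t)"
  by (simp add: brk_def)

lemma pp_app2: "pp p u (v @ w) = pp p u v * pp p u w"
  unfolding pp_def by (induction u) (simp_all add: mult_ac)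

lemma pp_app1: "pp p (u @ v) w = pp p u w * pp p v w"
  unfolding pp_def by (induction u) (simp_all add: mult_ac)

lemmas nsimps = brk_def pp_app1 pp_app2 ring_distribs mult.assoc scal_mid' scal_mult2

lemma E1: "brk p (du @ dv) dw (brk p du dv u v) w = u*(v*w) - scal (pp p du dv)*(v*(u*w)) - (scal (pp p du dw * pp p dv dw)*(w*(u*v)) - scal (pp p du dw * pp p dv dw * pp p du dv)*(w*(v*u)))"
  by (simp add: nsimps mult_ac)

lemma E2: "brk p du (dv @ dw) u (brk p dv dw v w) = u*(v*w) - scal (pp p dv dw)*(u*(w*v)) - (scal (pp p du dv * pp p du dw)*(v*(w*u)) - scal (pp p du dw * pp p dv dw * pp p du dv)*(w*(v*u)))"
  by (simp add: nsimps mult_ac)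

lemma E3: "scal (pp p dv dw) * (brk p du dw u w * v) = scal (pp p dv dw) * (u*(w*v)) - scal (pp p du dw * pp p dv dw)*(w*(u*v))"
  by (simp add: nsimps mult_ac)

lemma E4: "scal (pp p du dv) * (v * brk p du dw u w) = scal (pp p du dv) * (v*(u*w)) - scal (pp p du dv * pp p du dw)*(v*(w*u))"
  by (simp add: nsimps mult_ac)

lemma ag: "(x::'a::ab_group_add) - b - (c - d) - (x - e - (f - d)) = (e - c) - (b - f)"
  by (simp add: algebra_simps)

lemma D_id:
  "brk p (du @ dv) dw (brk p du dv u v) w - brk p du (dv @ dw) u (brk p dv dw v w)
   = scal (pp p dv dw) * (brk p du dw u w * v) - scal (pp p du dv) * (v * brk p du dw u w)"
  unfolding E1 E2 E3 E4 by (rule ag)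

lemma tI_left: "(a::'r::ring_1) \<in> tideal S \<Longrightarrow> u * a \<in> tideal S"
  using tideal.mult_in[of a S u 1] by simp
lemma tI_right: "(a::'r::ring_1) \<in> tideal S \<Longrightarrow> a * v \<in> tideal S"
  using tideal.mult_in[of a S 1 v] by simp
lemma tI_neg: "(a::'r::ring_1) \<in> tideal S \<Longrightarrow> - a \<in> tideal S"
  using tideal.mult_in[of a S "-1" 1] by simp
lemma tI_diff: "(a::'r::ring_1) \<in> tideal S \<Longrightarrow> b \<in> tideal S \<Longrightarrow> a - b \<in> tideal S"
  using tideal.add_in[OF _ tI_neg[of b]] by (metis diff_conv_add_uminus)
lemma tI_add: "a \<in> tideal S \<Longrightarrow> b \<in> tideal S \<Longrightarrow> a + b \<in> tideal S"
  by (rule tideal.add_in)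
lemma tI_eq: "a \<in> tideal S \<Longrightarrow> a = b \<Longrightarrow> b \<in> tideal S" by simp

lemma brk_I1: "u \<in> tideal S \<Longrightarrow> brk p du dv u v \<in> tideal S"
  unfolding brk_def by (rule tI_diff[OF tI_right tI_left])
lemma brk_I2: "v \<in> tideal S \<Longrightarrow> brk p du dv u v \<in> tideal S"
  unfolding brk_def by (rule tI_diff[OF tI_left tideal.mult_in])

lemma brk_cong:
  assumes "u - u' \<in> tideal S" "v - v' \<in> tideal S"
  shows "brk p du dv u v - brk p du dv u' v' \<in> tideal S"
proof -
  have "brk p du dv u v - brk p du dv u' v' =
        ((u - u') * v + u' * (v - v')) - scal (pp p du dv) * ((v - v') * u + v' * (u - u'))"
    by (simp add: brk_def ring_distribs mult.assoc diff_add_eq diff_diff_eq2 diff_add_eq_diff_diff_swap right_diff_distrib left_diff_distrib)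
  moreover have "... \<in> tideal S"
    using tI_diff[OF tI_add[OF tI_right[OF assms(1)] tI_left[OF assms(2)]] tI_left[OF tI_add[OF tI_right[OF assms(2)] tI_left[OF assms(1)]]]] .
  ultimately show ?thesis by simp
qed

lemma assoc_I:
  assumes "brk p du dw u w \<in> tideal S"
  shows "brk p (du @ dv) dw (brk p du dv u v) w - brk p du (dv @ dw) u (brk p dv dw v w) \<in> tideal S"
  unfolding D_id using assms by (metis tI_diff tI_left tI_right)

lemma inner_I:
  assumes "brk p du dv u v \<in> tideal S" "brk p du dw u w \<in> tideal S"
  shows "brk p du (dv @ dw) u (brk p dv dw v w) \<in> tideal S"
proof -
  have "brk p du (dv @ dw) u (brk p dv dw v w) = brk p (du @ dv) dw (brk p du dv u v) w -
     (brk p (du @ dv) dw (brk p du dv u v) w - brk p du (dv @ dw) u (brk p dv dw v w))" by simp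
  moreover have "... \<in> tideal S" using tI_diff[OF brk_I1[OF assms(1)] assoc_I[OF assms(2)]] .
  ultimately show ?thesis by simp
qed

lemma brk_swap:
  assumes "pp p du dv * pp p dv du = 1"
  shows "brk p du dv u v = - scal (pp p du dv) * brk p dv du v u"
proof -
  have e: "scal (pp p du dv) * (scal (pp p dv du) * X) = (X::'a falg)" for X using assms by (simp add: scal_mult2 scal_one)
  show ?thesis by (simp add: brk_def ring_distribs mult.assoc e)
qed

lemma brk_swap_I:
  assumes "pp p du dv * pp p dv du = 1" "brk p dv du v u \<in> tideal S"
  shows "brk p du dv u v \<in> tideal S"
  unfolding brk_swap[OF assms(1)] using assms(2) by (metis tI_left mult.assoc)






lemma core_identity:
  fixes p :: "nat \<Rightarrow> nat \<Rightarrow> 'k::field"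
  assumes dist: "a \<noteq> b" "b \<noteq> c" "a \<noteq> c"
    and qn: "q \<noteq> 0" "1 + q \<noteq> 0"
    and pa: "p a a = q" and pb: "p b b = q" and pc: "p c c = q"
    and hab: "p b a * p a b = inverse q" and hbc: "p c b * p b c = inverse q"
    and hac: "p a c * p c a = 1"
    and nz: "p a b \<noteq> 0" "p b c \<noteq> 0" "p a c \<noteq> 0"
    and rr: "r * (1 + q) = 1"
  shows "xeval p (Nd (Lf b) (Nd (Lf c) (Nd (Lf b) (Lf a)))) =
     scal (- 1*r/(q^2*(p a b)^2*p b c*p a c)) * xeval p (Nd (Nd (Lf a) (Lf b)) (Lf b)) * gen c
   + scal (p b c*r/((p a b)^2)) * gen c * xeval p (Nd (Nd (Lf a) (Lf b)) (Lf b))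
   + scal (-1*r/(p b c*p a c)) * gen b * gen b * xeval p (Nd (Lf a) (Lf c))
   + scal (1/(q*p a b*p a c)) * gen b * xeval p (Nd (Lf a) (Lf c)) * gen b
   + scal (-p b c*r/(q*(p a b)^2*p a c)) * xeval p (Nd (Lf a) (Lf c)) * gen b * gen b
   + scal (-1*r/(p b c)) * xeval p (Nd (Lf b) (Nd (Lf b) (Lf c))) * gen a
   + scal (1*r/(q^2*(p a b)^2*p b c*p a c)) * gen a * xeval p (Nd (Lf b) (Nd (Lf b) (Lf c)))" (is "?l = ?r")
proof -
  have pba: "p b a = inverse q / p a b" using hab nz by (simp add: eq_divide_eq mult.commute)
  have pcb: "p c b = inverse q / p b c" using hbc nz by (simp add: eq_divide_eq mult.commute)
  have pca: "p c a = 1 / p a c" using hac nz by (simp add: eq_divide_eq mult.commute)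
  have e: "r * x + q * (r * x) = x" for x
  proof - have "r * x + q * (r * x) = (r * (1+q)) * x" by (simp add: algebra_simps) then show ?thesis using rr by simp qed
  have L: "Poly_Mapping.lookup ?l (Word xs) = Poly_Mapping.lookup ?r (Word xs)" for xs
  proof (cases "xs \<in> set [[a,b,b,c], [a,b,c,b], [a,c,b,b], [b,a,b,c], [b,a,c,b], [b,b,a,c], [b,b,c,a], [b,c,a,b], [b,c,b,a], [c,a,b,b], [c,b,a,b], [c,b,b,a]]")
    case True
    then show ?thesis using dist
      apply (simp only: set_simps insert_iff empty_iff; elim disjE; (simp add: bdeg_def pp_def scal_single gen_single mult_single ring_distribs lookup_add lookup_minus lookup_single when_def pba pcb pca pa pb pc); (insert qn nz rr, simp add: field_simps power2_eq_square, algebra?, (simp add: e)?)?)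
      done
  next
    case False
    then have "[a,b,b,c] \<noteq> xs" "[a,b,c,b] \<noteq> xs" "[a,c,b,b] \<noteq> xs" "[b,a,b,c] \<noteq> xs" "[b,a,c,b] \<noteq> xs" "[b,b,a,c] \<noteq> xs" "[b,b,c,a] \<noteq> xs" "[b,c,a,b] \<noteq> xs" "[b,c,b,a] \<noteq> xs" "[c,a,b,b] \<noteq> xs" "[c,b,a,b] \<noteq> xs" "[c,b,b,a] \<noteq> xs" by auto
    then show ?thesis by (simp add: bdeg_def pp_def scal_single gen_single mult_single ring_distribs lookup_add lookup_minus lookup_single when_def pba pcb pca pa pb pc)
  qed
  show ?thesis
  proof (rule poly_mapping_eqI)
    fix w show "Poly_Mapping.lookup ?l w = Poly_Mapping.lookup ?r w" using L by (cases w) simp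
  qed
qed


declare beval.simps(2)[simp del] beval_Nd'[simp]

fun nc :: "('a \<Rightarrow> 'a \<Rightarrow> bool) \<Rightarrow> 'a list \<Rightarrow> bool" where
  "nc R [] = True"
| "nc R (x # L) = ((\<forall>y\<in>set (tl L). R x y) \<and> nc R L)"

lemma nc_suffix: "nc R (xs @ ys) \<Longrightarrow> nc R ys"
  by (induction xs) auto

lemma nc_prefix: "nc R (xs @ ys) \<Longrightarrow> nc R xs"
proof (induction xs)
  case Nil then show ?case by simp
next
  case (Cons x xs)
  then show ?case by (cases xs) auto
qed

lemma leaves_ne: "leaves t \<noteq> []"
  by (induction t) auto

lemma leaves_rcomb: "leaves (rcomb a L) = a # L"
  by (induction L arbitrary: a) auto

lemma bdeg_rcomb: "bdeg d (rcomb a L) = concat (map d (a # L))"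
  by (simp add: bdeg_def leaves_rcomb)

lemma bdeg_Lf[simp]: "bdeg d (Lf a) = d a" by (simp add: bdeg_def)
lemma bdeg_Nd[simp]: "bdeg d (Nd s t) = bdeg d s @ bdeg d t" by (simp add: bdeg_def)

lemma tI_trans: "a - b \<in> tideal S \<Longrightarrow> b - c \<in> tideal S \<Longrightarrow> a - (c::'r::ring_1) \<in> tideal S"
  using tI_add[of "a - b" S "b - c"] by simp

lemma tI_refl: "a - a \<in> tideal S" by (simp add: tideal.zero_in)

lemma tI_sym: "a - b \<in> tideal S \<Longrightarrow> b - (a::'r::ring_1) \<in> tideal S"
  using tI_neg[of "a - b" S] by simp

lemma L_lemma:
  assumes "\<forall>y\<in>set (leaves t). brk p du (d y) u (f y) \<in> tideal S"
  shows "brk p du (bdeg d t) u (beval p f d t) \<in> tideal S"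
  using assms
proof (induction t)
  case (Lf y) then show ?case by simp
next
  case (Nd s t)
  then show ?case by (simp add: beval_Nd' inner_I)
qed

context
  fixes p :: "nat \<Rightarrow> nat \<Rightarrow> 'k::field" and f :: "'a \<Rightarrow> 'k falg" and d :: "'a \<Rightarrow> nat list"
    and S :: "'k falg set"
begin

definition RR :: "'a \<Rightarrow> 'a \<Rightarrow> bool" where
  "RR x y \<longleftrightarrow> brk p (d x) (d y) (f x) (f y) \<in> tideal S"

lemma M_lemma:
  "nc RR (a # A @ b # B) \<Longrightarrow>
   brk p (bdeg d (rcomb a A)) (bdeg d (rcomb b B)) (beval p f d (rcomb a A)) (beval p f d (rcomb b B))
     - beval p f d (rcomb a (A @ b # B)) \<in> tideal S"
proof (induction A arbitrary: a)
  case Nil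
  then show ?case by (simp add: tideal.zero_in)
next
  case (Cons a' A')
  define u where "u = f a"
  define v where "v = beval p f d (rcomb a' A')"
  define w where "w = beval p f d (rcomb b B)"
  define du where "du = d a"
  define dv where "dv = bdeg d (rcomb a' A')"
  define dw where "dw = bdeg d (rcomb b B)"
  have nc1: "nc RR (a' # A' @ b # B)" using Cons.prems by simp
  have all: "\<forall>y\<in>set (b # B). RR a y" using Cons.prems by simp
  have uw: "brk p du dw u w \<in> tideal S"
    unfolding du_def dw_def u_def w_def
    by (rule L_lemma) (use all in \<open>simp add: leaves_rcomb RR_def\<close>)
  have IH: "brk p dv dw v w - beval p f d (rcomb a' (A' @ b # B)) \<in> tideal S"
    using Cons.IH[OF nc1] unfolding dv_def dw_def v_def w_def .
  have e1: "bdeg d (rcomb a' (A' @ b # B)) = dv @ dw"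
    unfolding dv_def dw_def bdeg_rcomb by simp
  have lhs: "beval p f d (rcomb a (a' # A')) = brk p du dv u v"
    by (simp add: beval_Nd' u_def v_def du_def dv_def)
  have lhsd: "bdeg d (rcomb a (a' # A')) = du @ dv"
    by (simp add: du_def dv_def)
  have rhs: "beval p f d (rcomb a ((a' # A') @ b # B)) = brk p du (dv @ dw) u (beval p f d (rcomb a' (A' @ b # B)))"
    using e1 by (simp add: beval_Nd' u_def du_def)
  have s1: "brk p (du @ dv) dw (brk p du dv u v) w - brk p du (dv @ dw) u (brk p dv dw v w) \<in> tideal S"
    by (rule assoc_I[OF uw])
  have s2: "brk p du (dv @ dw) u (brk p dv dw v w) - brk p du (dv @ dw) u (beval p f d (rcomb a' (A' @ b # B))) \<in> tideal S"
    by (rule brk_cong[OF tI_refl IH])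
  show ?case
    unfolding lhs lhsd rhs using tI_trans[OF s1 s2] by (simp add: w_def dw_def)
qed

lemma T_lemma:
  "leaves t = a # L \<Longrightarrow> nc RR (a # L) \<Longrightarrow> beval p f d t - beval p f d (rcomb a L) \<in> tideal S"
proof (induction t arbitrary: a L)
  case (Lf x) then show ?case by (simp add: tideal.zero_in)
next
  case (Nd s t)
  obtain a1 A where sA: "leaves s = a1 # A" using leaves_ne by (metis list.exhaust)
  obtain b B where tB: "leaves t = b # B" using leaves_ne by (metis list.exhaust)
  have aL: "a = a1" "L = A @ b # B" using Nd.prems(1) sA tB by auto
  have nc: "nc RR (a # A @ b # B)" using Nd.prems(2) aL by simp
  have ncA: "nc RR (a # A)" using nc_prefix[of RR "a # A" "b # B"] nc by simp
  have ncB: "nc RR (b # B)" using nc_suffix[of RR "a # A" "b # B"] nc by simp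
  have IHs: "beval p f d s - beval p f d (rcomb a A) \<in> tideal S" using Nd.IH(1)[OF _ ncA] sA aL by simp
  have IHt: "beval p f d t - beval p f d (rcomb b B) \<in> tideal S" using Nd.IH(2)[OF tB ncB] .
  have ds: "bdeg d s = bdeg d (rcomb a A)" using sA aL by (simp add: bdeg_def leaves_rcomb)
  have dt: "bdeg d t = bdeg d (rcomb b B)" using tB by (simp add: bdeg_def leaves_rcomb)
  have c1: "beval p f d (Nd s t) - brk p (bdeg d (rcomb a A)) (bdeg d (rcomb b B)) (beval p f d (rcomb a A)) (beval p f d (rcomb b B)) \<in> tideal S"
    unfolding beval_Nd' ds dt by (rule brk_cong[OF IHs IHt])
  show ?case using tI_trans[OF c1 M_lemma[OF nc]] aL by simp
qed

lemma all_brackets: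
  assumes "leaves t1 = L" "leaves t2 = L" "nc RR L"
  shows "beval p f d t1 - beval p f d t2 \<in> tideal S"
proof -
  obtain a L' where L: "L = a # L'" using leaves_ne assms(1) by (metis list.exhaust)
  show ?thesis
    using tI_trans[OF T_lemma[of t1 a L'] tI_sym[OF T_lemma[of t2 a L']]] assms L by simp
qed

end



lemma concat_single: "concat (map (\<lambda>i. [i]) xs) = xs" by (induction xs) auto

lemma bdeg_id: "bdeg (\<lambda>i. [i]) t = leaves t" by (simp add: bdeg_def concat_single)

lemma xeval_Nd: "xeval p (Nd s t) = brk p (leaves s) (leaves t) (xeval p s) (xeval p t)"
  by (simp add: bdeg_id)

lemma pp_single[simp]: "pp p [a] [b] = p a b" by (simp add: pp_def)

lemma leaves_map: "leaves (map_btree h t) = map h (leaves t)"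
  by (induction t) auto

lemma beval_map: "beval p (\<lambda>i. gen (h i)) (\<lambda>i. [h i]) t = xeval p (map_btree h t)"
proof (induction t)
  case (Lf x) then show ?case by simp
next
  case (Nd s t)
  have "bdeg (\<lambda>i. [h i]) s = bdeg (\<lambda>i. [i]) (map_btree h s)" "bdeg (\<lambda>i. [h i]) t = bdeg (\<lambda>i. [i]) (map_btree h t)"
    by (simp_all add: bdeg_def leaves_map o_def)
  with Nd show ?case by simp
qed

lemma map_rcomb: "map_btree h (rcomb a L) = rcomb (h a) (map h L)"
  by (induction L arbitrary: a) auto

definition dt :: "nat \<Rightarrow> nat \<Rightarrow> nat btree" where
  "dt l j = rcomb j (rev [l..<j])"

lemma dt_Suc: "l \<le> j \<Longrightarrow> dt l (Suc j) = Nd (Lf (Suc j)) (dt l j)"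
  by (simp add: dt_def)

lemma dt_l: "dt l l = Lf l" by (simp add: dt_def)

lemma leaves_dt: "leaves (dt l j) = j # rev [l..<j]"
  by (simp add: dt_def leaves_rcomb)

lemma T_in:
  fixes p :: "nat \<Rightarrow> nat \<Rightarrow> 'k::field"
  assumes dist: "a \<noteq> b" "b \<noteq> c" "a \<noteq> c"
    and qn: "q \<noteq> 0" "1 + q \<noteq> 0"
    and pa: "p a a = q" and pb: "p b b = q" and pc: "p c c = q"
    and hab: "p b a * p a b = inverse q" and hbc: "p c b * p b c = inverse q"
    and hac: "p a c * p c a = 1"
    and nz: "p a b \<noteq> 0" "p b c \<noteq> 0" "p a c \<noteq> 0"
    and S1: "xeval p (Nd (Nd (Lf a) (Lf b)) (Lf b)) \<in> tideal S"
    and S2: "xeval p (Nd (Lf b) (Nd (Lf b) (Lf c))) \<in> tideal S"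
    and R: "xeval p (Nd (Lf a) (Lf c)) \<in> tideal S"
  shows "xeval p (Nd (Lf b) (Nd (Lf c) (Nd (Lf b) (Lf a)))) \<in> tideal S"
proof -
  define r where "r = inverse (1 + q)"
  have rr: "r * (1 + q) = 1" using qn by (simp add: r_def)
  note ci = core_identity[OF dist qn pa pb pc hab hbc hac nz rr]
  show ?thesis
    unfolding ci
    apply (simp only: mult.assoc)
    by (intro tI_add tI_left[OF tI_right[OF S1]] tI_left[OF tI_left[OF S1]]
        tI_left[OF tI_left[OF tI_left[OF R]]] tI_left[OF tI_left[OF tI_right[OF R]]]
        tI_left[OF tI_right[OF R]] tI_left[OF tI_right[OF S2]] tI_left[OF tI_left[OF S2]])
qed

lemma tI_from_diff: "a - b \<in> tideal S \<Longrightarrow> b \<in> tideal S \<Longrightarrow> (a::'r::ring_1) \<in> tideal S"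
  using tI_add[of "a - b" S b] by simp

lemma chain3:
  assumes bZ: "brk p [b] lz B Zv \<in> tideal S" and cZ: "brk p [c] lz C Zv \<in> tideal S"
    and T: "brk p [b] [c,b,a] B (brk p [c] [b,a] C (brk p [b] [a] B A)) \<in> tideal S"
  shows "brk p [b] (c#b#a#lz) B (brk p [c] (b#a#lz) C (brk p [b] (a#lz) B (brk p [a] lz A Zv))) \<in> tideal S"
proof -
  define P1 where "P1 = brk p [b] [a] B A"
  define W1 where "W1 = brk p [b,a] lz P1 Zv"
  define Y1 where "Y1 = brk p [b] (a#lz) B (brk p [a] lz A Zv)"
  define P2 where "P2 = brk p [c] [b,a] C P1"
  define W2 where "W2 = brk p [c,b,a] lz P2 Zv"
  define Y2 where "Y2 = brk p [c] (b#a#lz) C Y1"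
  define W3 where "W3 = brk p [b,c,b,a] lz (brk p [b] [c,b,a] B P2) Zv"
  have s1: "W1 - Y1 \<in> tideal S" using assoc_I[OF bZ, of "[a]" A] by (simp add: W1_def Y1_def P1_def)
  have s2: "Y2 - brk p [c] (b#a#lz) C W1 \<in> tideal S"
    unfolding Y2_def by (rule brk_cong[OF tI_refl tI_sym[OF s1]])
  have s3: "W2 - brk p [c] (b#a#lz) C W1 \<in> tideal S"
    using assoc_I[OF cZ, of "[b,a]" P1] by (simp add: W1_def W2_def P2_def)
  have s23: "Y2 - W2 \<in> tideal S" by (rule tI_trans[OF s2 tI_sym[OF s3]])
  have s4: "brk p [b] (c#b#a#lz) B Y2 - brk p [b] (c#b#a#lz) B W2 \<in> tideal S"
    by (rule brk_cong[OF tI_refl s23])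
  have s5: "W3 - brk p [b] (c#b#a#lz) B W2 \<in> tideal S"
    using assoc_I[OF bZ, of "[c,b,a]" P2] by (simp add: W2_def W3_def)
  have s6: "W3 \<in> tideal S" unfolding W3_def P2_def P1_def by (rule brk_I1[OF T])
  have "brk p [b] (c#b#a#lz) B Y2 - W3 \<in> tideal S" by (rule tI_trans[OF s4 tI_sym[OF s5]])
  then have "brk p [b] (c#b#a#lz) B Y2 \<in> tideal S" by (rule tI_from_diff[OF _ s6])
  then show ?thesis by (simp add: Y2_def Y1_def)
qed

lemma xidx_n1: "xidx n (n+1) = n - 1" by (simp add: xidx_def)

lemma map_xidx:
  assumes "n + 1 < m" "m < 2*n"
  shows "map (xidx n) [n+2..<m+1] = rev [2*n-m..<n-1]"
proof (rule nth_equalityI)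
  show "length (map (xidx n) [n+2..<m+1]) = length (rev [2*n-m..<n-1])" using assms by simp
next
  fix i assume "i < length (map (xidx n) [n+2..<m+1])"
  then have i: "i < m - n - 1" by (simp only: length_map length_upt)
  have "map (xidx n) [n+2..<m+1] ! i = 2*n - (n + 2 + i)" using i by (simp add: xidx_def del: upt_Suc)
  moreover have "rev [2*n-m..<n-1] ! i = 2*n - m + (n - 1 - (2*n-m) - Suc i)"
    using i assms by (simp add: rev_nth)
  ultimately show "map (xidx n) [n+2..<m+1] ! i = rev [2*n-m..<n-1] ! i" using i assms by simp
qed

lemma ym_eq:
  assumes "n + 1 < m" "m < 2*n"
  shows "ym p n m = xeval p (dt (2*n-m) (n-1))"
proof -
  have "ym p n m = xeval p (map_btree (xidx n) (rcomb (n+1) [n+2..<m+1]))"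
    unfolding ym_def by (rule beval_map)
  also have "... = xeval p (rcomb (n-1) (rev [2*n-m..<n-1]))"
    by (simp only: map_rcomb xidx_n1 map_xidx[OF assms])
  finally show ?thesis by (simp add: dt_def)
qed

lemma ydeg_eq:
  assumes "n + 1 < m" "m < 2*n"
  shows "atom_deg n m None = leaves (dt (2*n-m) (n-1))"
proof -
  have "[n+1..<m+1] = (n+1) # [n+2..<m+1]" using assms by (simp add: upt_conv_Cons)
  then show ?thesis unfolding atom_deg_def leaves_dt using map_xidx[OF assms] xidx_n1 by simp
qed

locale setting =
  fixes p :: "nat \<Rightarrow> nat \<Rightarrow> 'k::field" and q :: 'k and n :: nat
  assumes q_nz: "q \<noteq> 0" and q_neq: "q \<noteq> -1" and n3: "n \<ge> 3"
    and pii: "\<And>i. 1 \<le> i \<Longrightarrow> i \<le> n \<Longrightarrow> p i i = q"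
    and padj: "\<And>i. 1 < i \<Longrightarrow> i < n \<Longrightarrow> p i (i-1) * p (i-1) i = inverse q"
    and pother: "\<And>i j. 1 \<le> i \<Longrightarrow> i + 1 < j \<Longrightarrow> j \<le> n \<Longrightarrow> \<not> (i = n-2 \<and> j = n)
                  \<Longrightarrow> p i j * p j i = 1"
    and p_nz: "\<And>i j. p i j \<noteq> 0"
begin

lemma rel_S1: "1 \<le> j \<Longrightarrow> j \<le> n-2 \<Longrightarrow> xeval p (Nd (Nd (Lf j) (Lf (j+1))) (Lf (j+1))) \<in> tideal (so_rels p n)"
proof -
  assume h: "1 \<le> j" "j \<le> n-2"
  have "xeval p (Nd (Nd (Lf j) (Lf (j+1))) (Lf (j+1))) \<in> {xeval p (Nd (Nd (Lf i) (Lf (i+1))) (Lf (i+1))) | i. 1 \<le> i \<and> i \<le> n - 2}"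
    using h by (intro CollectI exI[of _ j]) auto
  then show ?thesis unfolding so_rels_def by (rule tideal.gen_in[OF UnI1, OF UnI1, OF UnI1, OF UnI1, OF UnI2])
qed

lemma rel_S2: "1 \<le> j \<Longrightarrow> j \<le> n-2 \<Longrightarrow> xeval p (Nd (Lf j) (Nd (Lf j) (Lf (j+1)))) \<in> tideal (so_rels p n)"
proof -
  assume h: "1 \<le> j" "j \<le> n-2"
  have "xeval p (Nd (Lf j) (Nd (Lf j) (Lf (j+1)))) \<in> {xeval p (Nd (Lf i) (Nd (Lf i) (Lf (i+1)))) | i. 1 \<le> i \<and> i \<le> n - 2}"
    using h by (intro CollectI exI[of _ j]) auto
  then show ?thesis unfolding so_rels_def by (rule tideal.gen_in[OF UnI1, OF UnI1, OF UnI1, OF UnI1, OF UnI1])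
qed

lemma rel_R: "1 \<le> i \<Longrightarrow> i + 1 < j \<Longrightarrow> j \<le> n-1 \<Longrightarrow> xeval p (Nd (Lf i) (Lf j)) \<in> tideal (so_rels p n)"
proof -
  assume h: "1 \<le> i" "i + 1 < j" "j \<le> n-1"
  have "xeval p (Nd (Lf i) (Lf j)) \<in> {xeval p (Nd (Lf i) (Lf j)) | i j. 1 \<le> i \<and> i < j \<and> j \<le> n - 1 \<and> i + 1 < j}"
    using h by (intro CollectI exI[of _ i] exI[of _ j]) auto
  then show ?thesis unfolding so_rels_def by (rule tideal.gen_in[OF UnI1, OF UnI1, OF UnI2])
qed

lemma rel_n: "1 \<le> i \<Longrightarrow> i \<le> n-3 \<Longrightarrow> xeval p (Nd (Lf i) (Lf n)) \<in> tideal (so_rels p n)"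
proof -
  assume h: "1 \<le> i" "i \<le> n-3"
  have "xeval p (Nd (Lf i) (Lf n)) \<in> {xeval p (Nd (Lf i) (Lf n)) | i. 1 \<le> i \<and> i \<le> n - 3}"
    using h by (intro CollectI exI[of _ i]) auto
  then show ?thesis unfolding so_rels_def by (rule tideal.gen_in[OF UnI1, OF UnI2])
qed

lemma comm_xy: "1 \<le> x \<Longrightarrow> x + 1 < y \<Longrightarrow> y \<le> n-1 \<Longrightarrow> brk p [x] [y] (gen x) (gen y) \<in> tideal (so_rels p n)"
  using rel_R[of x y] by (simp add: bdeg_id)

lemma comm_yx: "1 \<le> x \<Longrightarrow> x + 1 < y \<Longrightarrow> y \<le> n-1 \<Longrightarrow> brk p [y] [x] (gen y) (gen x) \<in> tideal (so_rels p n)"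
proof -
  assume h: "1 \<le> x" "x + 1 < y" "y \<le> n-1"
  have "p x y * p y x = 1" using h n3 by (intro pother) auto
  then have "pp p [y] [x] * pp p [x] [y] = 1" by (simp add: mult.commute)
  then show ?thesis by (rule brk_swap_I) (rule comm_xy[OF h])
qed

lemma T_core:
  assumes "2 \<le> i" "i \<le> n-2"
  shows "xeval p (Nd (Lf i) (Nd (Lf (i+1)) (Nd (Lf i) (Lf (i-1))))) \<in> tideal (so_rels p n)"
proof (rule T_in)
  have i1: "i - 1 + 1 = i" using assms by simp
  show "i - 1 \<noteq> i" "i \<noteq> i + 1" "i - 1 \<noteq> i + 1" using assms by auto
  show "q \<noteq> 0" by (rule q_nz)
  show "1 + q \<noteq> 0" proof assume "1 + q = 0" then have "q = -1" by (simp add: eq_neg_iff_add_eq_0 add.commute) then show False using q_neq by simp qed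
  show "p (i-1) (i-1) = q" using assms by (intro pii) auto
  show "p i i = q" using assms by (intro pii) auto
  show "p (i+1) (i+1) = q" using assms by (intro pii) auto
  show "p i (i - 1) * p (i - 1) i = inverse q" using assms by (intro padj) auto
  have "p (i + 1) (i + 1 - 1) * p (i + 1 - 1) (i + 1) = inverse q" using assms by (intro padj) auto
  then show "p (i + 1) i * p i (i + 1) = inverse q" by simp
  have o1: "1 \<le> i - 1" "i - 1 + 1 < i + 1" "i + 1 \<le> n" "\<not> (i - 1 = n - 2 \<and> i + 1 = n)"
    using assms by linarith+
  have "p (i - 1) (i + 1) * p (i + 1) (i - 1) = 1" by (rule pother[OF o1])
  then show "p (i - 1) (i + 1) * p (i + 1) (i - 1) = 1" .
  show "p (i - 1) i \<noteq> 0" "p i (i + 1) \<noteq> 0" "p (i - 1) (i + 1) \<noteq> 0" by (rule p_nz)+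
  have "xeval p (Nd (Nd (Lf (i - 1)) (Lf (i - 1 + 1))) (Lf (i - 1 + 1))) \<in> tideal (so_rels p n)"
    using assms by (intro rel_S1) auto
  then show "xeval p (Nd (Nd (Lf (i - 1)) (Lf i)) (Lf i)) \<in> tideal (so_rels p n)"
    unfolding i1 .
  show "xeval p (Nd (Lf i) (Nd (Lf i) (Lf (i + 1)))) \<in> tideal (so_rels p n)"
    using assms by (intro rel_S2) auto
  show "xeval p (Nd (Lf (i - 1)) (Lf (i + 1))) \<in> tideal (so_rels p n)"
    using assms by (intro rel_R) auto
qed

lemma letters_comm:
  assumes "1 \<le> l" "x \<le> n - 1" "\<forall>y\<in>set (leaves t). l \<le> y \<and> y + 1 < x"
  shows "brk p [x] (leaves t) (gen x) (xeval p t) \<in> tideal (so_rels p n)"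
proof -
  have "brk p [x] (bdeg (\<lambda>i. [i]) t) (gen x) (beval p gen (\<lambda>i. [i]) t) \<in> tideal (so_rels p n)"
  proof (rule L_lemma, intro ballI)
    fix y assume y: "y \<in> set (leaves t)"
    then have "1 \<le> y" "y + 1 < x" using assms by (meson le_trans)+
    then show "brk p [x] [y] (gen x) (gen y) \<in> tideal (so_rels p n)"
      using assms(2) by (intro comm_yx)
  qed
  then show ?thesis by (simp only: bdeg_id)
qed

lemma H_base:
  assumes l1: "1 \<le> l" and li: "l < i" and iN: "i \<le> n-2"
  shows "brk p [i] (leaves (dt l (i+1))) (gen i) (xeval p (dt l (i+1))) \<in> tideal (so_rels p n)"
proof -
  have i2: "2 \<le> i" using l1 li by linarith
  have geq: "brk p [i] (leaves (dt l (i+1))) (gen i) (xeval p (dt l (i+1))) = xeval p (Nd (Lf i) (dt l (i+1)))"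
    by (simp only: xeval_Nd leaves.simps beval.simps(1))
  have d1: "dt l (i+1) = Nd (Lf (i+1)) (Nd (Lf i) (dt l (i-1)))"
  proof -
    have "dt l (Suc i) = Nd (Lf (Suc i)) (dt l i)" using li by (intro dt_Suc) linarith
    moreover have "dt l (Suc (i-1)) = Nd (Lf (Suc (i-1))) (dt l (i-1))" using li by (intro dt_Suc) linarith
    moreover have "Suc (i - 1) = i" using i2 by linarith
    ultimately show ?thesis by simp
  qed
  show ?thesis
  proof (cases "l = i - 1")
    case True
    then have "dt l (i-1) = Lf (i-1)" by (simp add: dt_l)
    then show ?thesis unfolding geq d1 using T_core[OF i2 iN] by simp
  next
    case False
    define Z where "Z = dt l (i-2)"
    have d2: "dt l (i-1) = Nd (Lf (i-1)) Z"
    proof -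
      have "dt l (Suc (i-2)) = Nd (Lf (Suc (i-2))) Z" unfolding Z_def using li False by (intro dt_Suc) linarith
      moreover have "Suc (i - 2) = i - 1" using i2 by linarith
      ultimately show ?thesis by simp
    qed
    have lz: "\<forall>y\<in>set (leaves Z). l \<le> y \<and> y \<le> i - 2"
      unfolding Z_def leaves_dt using li False by auto
    have lz2: "\<forall>y\<in>set (leaves Z). l \<le> y \<and> y + 1 < i"
    proof (intro ballI)
      fix y assume "y \<in> set (leaves Z)"
      with lz have "l \<le> y" "y \<le> i-2" by auto
      then show "l \<le> y \<and> y + 1 < i" using i2 by linarith
    qed
    have lz3: "\<forall>y\<in>set (leaves Z). l \<le> y \<and> y + 1 < i + 1"
      using lz2 by auto
    have bZ: "brk p [i] (leaves Z) (gen i) (xeval p Z) \<in> tideal (so_rels p n)"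
      by (rule letters_comm[OF l1 _ lz2]) (use iN in linarith)
    have cZ: "brk p [i+1] (leaves Z) (gen (i+1)) (xeval p Z) \<in> tideal (so_rels p n)"
      by (rule letters_comm[OF l1 _ lz3]) (use iN i2 n3 in linarith)
    have T: "brk p [i] [i+1, i, i-1] (gen i) (brk p [i+1] [i, i-1] (gen (i+1)) (brk p [i] [i-1] (gen i) (gen (i-1)))) \<in> tideal (so_rels p n)"
      using T_core[OF i2 iN] by (simp only: xeval_Nd leaves.simps beval.simps(1) append.simps)
    have "xeval p (Nd (Lf i) (dt l (i+1))) =
      brk p [i] ((i+1)#i#(i-1)#leaves Z) (gen i) (brk p [i+1] (i#(i-1)#leaves Z) (gen (i+1)) (brk p [i] ((i-1)#leaves Z) (gen i) (brk p [i-1] (leaves Z) (gen (i-1)) (xeval p Z))))"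
      unfolding d1 d2 by (simp only: xeval_Nd leaves.simps beval.simps(1) append.simps)
    then show ?thesis unfolding geq using chain3[OF bZ cZ T] by simp
  qed
qed

lemma H:
  assumes l1: "1 \<le> l" and li: "l < i" and iN: "i \<le> n-2" and ij: "i + 1 \<le> j" and jn: "j \<le> n - 1"
  shows "brk p [i] (leaves (dt l j)) (gen i) (xeval p (dt l j)) \<in> tideal (so_rels p n)"
  using ij jn
proof (induction j rule: dec_induct)
  case base
  show ?case by (rule H_base[OF l1 li iN])
next
  case (step j)
  have d: "dt l (Suc j) = Nd (Lf (Suc j)) (dt l j)" using step.hyps li by (intro dt_Suc) linarith
  have c: "brk p [i] [Suc j] (gen i) (gen (Suc j)) \<in> tideal (so_rels p n)"
    using step l1 li by (intro comm_xy) linarith+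
  have IH: "brk p [i] (leaves (dt l j)) (gen i) (xeval p (dt l j)) \<in> tideal (so_rels p n)"
    using step by linarith
  have "brk p [i] ([Suc j] @ leaves (dt l j)) (gen i) (brk p [Suc j] (leaves (dt l j)) (gen (Suc j)) (xeval p (dt l j))) \<in> tideal (so_rels p n)"
    by (rule inner_I[OF c IH])
  then show ?case unfolding d by (simp only: xeval_Nd leaves.simps beval.simps(1) append.simps)
qed

lemma seq_nc:
  assumes k1: "1 \<le> k" and kn: "k < n" and lk: "2*n - m < k" and m1: "n + 1 < m" and m2: "m < 2*n"
  shows "nc (RR p (atom_val p n m) (atom_deg n m) (so_rels p n)) (the_seq n k)"
proof -
  let ?R = "RR p (atom_val p n m) (atom_deg n m) (so_rels p n)"
  have RSS: "?R (Some x) (Some y)" if "1 \<le> x" "x + 1 < y" "y \<le> n - 2" for x y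
    unfolding RR_def atom_val_def atom_deg_def using that by (simp add: comm_xy)
  have RSn: "?R (Some x) (Some n)" if "1 \<le> x" "x \<le> n - 3" for x
    unfolding RR_def atom_val_def atom_deg_def using rel_n[OF that]
    by (simp only: xeval_Nd leaves.simps beval.simps(1) option.case)
  have RSN: "?R (Some x) None" if "2*n - m < x" "x \<le> n - 2" for x
  proof -
    have "brk p [x] (leaves (dt (2*n-m) (n-1))) (gen x) (xeval p (dt (2*n-m) (n-1))) \<in> tideal (so_rels p n)"
      using that m2 n3 by (intro H) linarith+
    then show ?thesis
      unfolding RR_def atom_val_def ydeg_eq[OF m1 m2] ym_eq[OF m1 m2] by (simp add: atom_deg_def)
  qed
  have P: "nc ?R (map Some [k'..<n-1] @ [Some n, None])" if "k \<le> k'" "k' \<le> n - 1" for k'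
    using that(2)
  proof (induction k' rule: inc_induct)
    case base then show ?case by simp
  next
    case (step j)
    have kj: "k \<le> j" using that(1) step.hyps(1) by linarith
    have up: "[j..<n-1] = j # [Suc j..<n-1]" using step.hyps by (simp add: upt_conv_Cons)
    have tlR: "\<forall>z\<in>set (tl (map Some [Suc j..<n-1] @ [Some n, None])). ?R (Some j) z"
    proof (cases "Suc j < n - 1")
      case True
      have up2: "[Suc j..<n-1] = Suc j # [Suc (Suc j)..<n-1]" using True by (simp add: upt_conv_Cons)
      show ?thesis
      proof
        fix z assume "z \<in> set (tl (map Some [Suc j..<n-1] @ [Some n, None]))"
        then have "z \<in> Some ` {Suc (Suc j)..<n-1} \<or> z = Some n \<or> z = None" unfolding up2 by auto
        then show "?R (Some j) z"
        proof (elim disjE)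
          assume "z \<in> Some ` {Suc (Suc j)..<n-1}"
          then obtain y where "z = Some y" "Suc (Suc j) \<le> y" "y < n - 1" by auto
          then show ?thesis using RSS[of j y] k1 kj by simp
        next
          assume "z = Some n" then show ?thesis using RSn[of j] k1 kj True by simp
        next
          assume "z = None" then show ?thesis using RSN[of j] lk kj True by simp
        qed
      qed
    next
      case False
      then have e: "[Suc j..<n-1] = []" by simp
      have "?R (Some j) None" using RSN[of j] lk kj False step.hyps by simp
      then show ?thesis unfolding e by simp
    qed
    show ?case unfolding up using tlR step.IH by simp
  qed
  show ?thesis unfolding the_seq_def using P[of k] kn by simp
qed

end


theorem lemma6p5:
  fixes q :: "'k::field"
    and g :: "nat \<Rightarrow> 'g::ab_group_add"
    and chi :: "nat \<Rightarrow> 'g \<Rightarrow> 'k"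
    and p :: "nat \<Rightarrow> nat \<Rightarrow> 'k"
    and n k m :: nat
  assumes chi_hom: "\<And>i a b. chi i (a + b) = chi i a * chi i b"
    and chi_nz: "\<And>i a. chi i a \<noteq> 0"
    and p_def: "\<And>i j. p i j = chi i (g j)"
    and q_nz: "q \<noteq> 0" and q_neq: "q \<noteq> -1"
    and n3: "n \<ge> 3"
    and pii: "\<And>i. 1 \<le> i \<Longrightarrow> i \<le> n \<Longrightarrow> p i i = q"
    and padj: "\<And>i. 1 < i \<Longrightarrow> i < n \<Longrightarrow> p i (i-1) * p (i-1) i = inverse q"
    and pn2: "p (n-2) n * p n (n-2) = inverse q"
    and pn1: "p (n-1) n * p n (n-1) = 1"
    and pother: "\<And>i j. 1 \<le> i \<Longrightarrow> i + 1 < j \<Longrightarrow> j \<le> n \<Longrightarrow> \<not> (i = n-2 \<and> j = n)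
                  \<Longrightarrow> p i j * p j i = 1"
    and k1: "1 \<le> k" and kn: "k < n"
    and m_lo: "phi n k < m" and m_hi: "m < 2*n"
  shows "\<forall>t1 t2. leaves t1 = the_seq n k \<longrightarrow> leaves t2 = the_seq n k \<longrightarrow>
           Ueq p n (beval p (atom_val p n m) (atom_deg n m) t1)
                   (beval p (atom_val p n m) (atom_deg n m) t2)"
proof (intro allI impI)
  fix t1 t2
  assume t1: "leaves t1 = the_seq n k" and t2: "leaves t2 = the_seq n k"
  have pnz: "\<And>i j. p i j \<noteq> 0" using chi_nz p_def by simp
  interpret setting p q n
    using q_nz q_neq n3 pii padj pother pnz by unfold_locales auto
  have m1: "n + 1 < m" using m_lo kn unfolding phi_def by linarith
  have lk: "2*n - m < k" using m_lo m_hi kn unfolding phi_def by arith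
  have nc: "nc (RR p (atom_val p n m) (atom_deg n m) (so_rels p n)) (the_seq n k)"
    by (rule seq_nc[OF k1 kn lk m1 m_hi])
  show "Ueq p n (beval p (atom_val p n m) (atom_deg n m) t1) (beval p (atom_val p n m) (atom_deg n m) t2)"
    unfolding Ueq_def by (rule all_brackets[OF t1 t2 nc])
qed

end
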